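(* Let $p,q$ be distinct primes and let $(G,H,T)$ be the envelope of a right conjugacy closed loop of order $pq$. Let $K$ be a subgroup with $H\lneq K\lneq G$, $|G:K|=q$ and $|K:H|=p$. Put $T_1=T\cap K$, $K_1=\langle T_1\rangle$ and $H_1=H\cap K_1$. Then $(K_1,H_1,T_1)$ is an RCC loop folder of order $p$ and $K_1$ is abelian. Moreover $K_1\trianglelefteq K$, $K=HK_1$, and $H_1\trianglelefteq K$.
   Context: For a finite loop $\mathcal{L}$ with identity $e$: $G=\langle R_a\mid a\in\mathcal L\rangle$ with $R_a\colon x\mapsto xa$, $H$ the stabilizer of $e$, $T=\{R_a\}$; $(G,H,T)$ is the envelope; the loop is right conjugacy closed if $T$ is a union of conjugacy classes of $G$. A loop folder is a triple $(G,H,T)$ with $G$ finite, $H\le G$, $1\in T\subseteq G$, $T$ a set of representatives of the right cosets $H^g\backslash G$ for every $g\in G$; RCC loop folder if $T$ is $G$-conjugation invariant; order $|T|$. *)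

theory Defs
  imports "HOL-Algebra.Algebra"
begin

definition loop :: "'a set \<Rightarrow> ('a \<Rightarrow> 'a \<Rightarrow> 'a) \<Rightarrow> 'a \<Rightarrow> bool" where
  "loop L m e \<longleftrightarrow>
     e \<in> L \<and> (\<forall>x\<in>L. \<forall>y\<in>L. m x y \<in> L) \<and>
     (\<forall>x\<in>L. m e x = x \<and> m x e = x) \<and>
     (\<forall>a\<in>L. \<forall>b\<in>L. \<exists>!x. x \<in> L \<and> m a x = b) \<and>
     (\<forall>a\<in>L. \<forall>b\<in>L. \<exists>!y. y \<in> L \<and> m y a = b)"

text \<open>Permutations of S acting on the right: f \<otimes> g means first f, then g.\<close>
definition RBijGroup :: "'a set \<Rightarrow> ('a \<Rightarrow> 'a) monoid" where
  "RBijGroup S = \<lparr>carrier = Bij S, monoid.mult = (\<lambda>f g. compose S g f), one = (\<lambda>x\<in>S. x)\<rparr>"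

definition rtrans :: "'a set \<Rightarrow> ('a \<Rightarrow> 'a \<Rightarrow> 'a) \<Rightarrow> 'a \<Rightarrow> ('a \<Rightarrow> 'a)" where
  "rtrans L m a = (\<lambda>x\<in>L. m x a)"

definition env_T :: "'a set \<Rightarrow> ('a \<Rightarrow> 'a \<Rightarrow> 'a) \<Rightarrow> ('a \<Rightarrow> 'a) set" where
  "env_T L m = rtrans L m ` L"

definition env_G :: "'a set \<Rightarrow> ('a \<Rightarrow> 'a \<Rightarrow> 'a) \<Rightarrow> ('a \<Rightarrow> 'a) set" where
  "env_G L m = generate (RBijGroup L) (env_T L m)"

definition env_H :: "'a set \<Rightarrow> ('a \<Rightarrow> 'a \<Rightarrow> 'a) \<Rightarrow> 'a \<Rightarrow> ('a \<Rightarrow> 'a) set" where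
  "env_H L m e = {g \<in> env_G L m. g e = e}"

definition rcc_loop :: "'a set \<Rightarrow> ('a \<Rightarrow> 'a \<Rightarrow> 'a) \<Rightarrow> 'a \<Rightarrow> bool" where
  "rcc_loop L m e \<longleftrightarrow> loop L m e \<and> finite L \<and>
     (\<forall>g\<in>env_G L m. \<forall>t\<in>env_T L m.
        inv\<^bsub>RBijGroup L\<^esub> g \<otimes>\<^bsub>RBijGroup L\<^esub> t \<otimes>\<^bsub>RBijGroup L\<^esub> g \<in> env_T L m)"

text \<open>Loop folder (G,H,T): G finite group, H \<le> G, 1 \<in> T \<subseteq> G, and T is a set of
  representatives of the right cosets of H^g = g\<inverse> H g in G, for every g \<in> G.\<close>
definition loop_folder :: "('g, 'b) monoid_scheme \<Rightarrow> 'g set \<Rightarrow> 'g set \<Rightarrow> bool" where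
  "loop_folder G H T \<longleftrightarrow> group G \<and> finite (carrier G) \<and> subgroup H G \<and>
     \<one>\<^bsub>G\<^esub> \<in> T \<and> T \<subseteq> carrier G \<and>
     (\<forall>g\<in>carrier G. \<forall>x\<in>carrier G.
        \<exists>!t. t \<in> T \<and> t \<in> ((inv\<^bsub>G\<^esub> g) <#\<^bsub>G\<^esub> H #>\<^bsub>G\<^esub> g) #>\<^bsub>G\<^esub> x)"

definition rcc_loop_folder :: "('g, 'b) monoid_scheme \<Rightarrow> 'g set \<Rightarrow> 'g set \<Rightarrow> bool" where
  "rcc_loop_folder G H T \<longleftrightarrow> loop_folder G H T \<and>
     (\<forall>g\<in>carrier G. \<forall>t\<in>T. inv\<^bsub>G\<^esub> g \<otimes>\<^bsub>G\<^esub> t \<otimes>\<^bsub>G\<^esub> g \<in> T)"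

end

theory Submission imports Defs "HOL-Computational_Algebra.Primes" "HOL-Algebra.Sylow" "HOL-Algebra.Group_Action" begin

lemma group_RBij: "group (RBijGroup S)"
proof -
  have inv: "\<exists>y\<in>Bij S. compose S x y = (\<lambda>x\<in>S. x)" if "x \<in> Bij S" for x
    apply (rule bexI[of _ "restrict (inv_into S x) S"])
    using that apply (simp add: Bij_def compose_id_inv_into bij_betw_def)
    using that by (rule restrict_inv_into_Bij)
  show ?thesis
    unfolding RBijGroup_def
    apply (rule groupI)
    using inv apply (simp_all add: compose_Bij id_Bij Bij_imp_funcset Bij_imp_extensional compose_assoc)
    by (metis compose_Id Bij_imp_funcset Bij_imp_extensional)
qed

lemma loopD:
  assumes "loop L m e"
  shows "e \<in> L" "\<And>x y. x \<in> L \<Longrightarrow> y \<in> L \<Longrightarrow> m x y \<in> L"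
    "\<And>x. x \<in> L \<Longrightarrow> m e x = x" "\<And>x. x \<in> L \<Longrightarrow> m x e = x"
    "\<And>a b. a \<in> L \<Longrightarrow> b \<in> L \<Longrightarrow> \<exists>!x. x \<in> L \<and> m a x = b"
    "\<And>a b. a \<in> L \<Longrightarrow> b \<in> L \<Longrightarrow> \<exists>!y. y \<in> L \<and> m y a = b"
  using assms unfolding loop_def by auto

locale env = group GG for GG :: "('a \<Rightarrow> 'a) monoid" (structure) +
  fixes L :: "'a set" and m :: "'a \<Rightarrow> 'a \<Rightarrow> 'a" and e :: 'a
  assumes GGdef: "GG = RBijGroup L"
    and rcc: "rcc_loop L m e"
begin

lemma lp: "loop L m e" and finL: "finite L" using rcc by (auto simp: rcc_loop_def)

lemmas lpD = loopD[OF lp]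

lemma carr: "carrier GG = Bij L" by (simp add: GGdef RBijGroup_def)

lemma mult_eval: "u \<in> L \<Longrightarrow> (f \<otimes> g) u = g (f u)"
  by (simp add: GGdef RBijGroup_def compose_def)

lemma one_eval: "u \<in> L \<Longrightarrow> \<one> u = u"
  by (simp add: GGdef RBijGroup_def)

lemma into: "f \<in> carrier GG \<Longrightarrow> u \<in> L \<Longrightarrow> f u \<in> L"
  using carr Bij_imp_funcset funcset_mem by metis

lemma fun_eq: "f \<in> carrier GG \<Longrightarrow> g \<in> carrier GG \<Longrightarrow> (\<And>u. u \<in> L \<Longrightarrow> f u = g u) \<Longrightarrow> f = g"
  by (rule extensionalityI[of f L g]) (use carr Bij_imp_extensional in auto)

lemma inv_eval1: "f \<in> carrier GG \<Longrightarrow> u \<in> L \<Longrightarrow> (inv f) (f u) = u"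
  using mult_eval[of u f "inv f"] one_eval[of u] by simp

lemma inv_eval2: "f \<in> carrier GG \<Longrightarrow> u \<in> L \<Longrightarrow> f ((inv f) u) = u"
  using mult_eval[of u "inv f" f] one_eval[of u] by simp

lemma fin_carr: "finite (carrier GG)"
proof -
  have "carrier GG \<subseteq> PiE L (\<lambda>_. L)"
    proof
    fix f assume "f \<in> carrier GG"
    thus "f \<in> PiE L (\<lambda>_. L)" unfolding PiE_def carr using Bij_imp_funcset Bij_imp_extensional by blast
  qed
  thus ?thesis using finite_PiE[OF finL, of "\<lambda>_. L"] finL finite_subset by blast
qed

lemma rt_eval: "u \<in> L \<Longrightarrow> rtrans L m a u = m u a" by (simp add: rtrans_def)

lemma rt_e: "a \<in> L \<Longrightarrow> rtrans L m a e = a" using lpD(1,3) by (simp add: rtrans_def)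

lemma rt_carr: "a \<in> L \<Longrightarrow> rtrans L m a \<in> carrier GG"
proof -
  assume a: "a \<in> L"
  have "bij_betw (\<lambda>x. m x a) L L"
  proof (rule bij_betw_imageI)
    show "inj_on (\<lambda>x. m x a) L" using lpD(6)[OF a] unfolding inj_on_def by (metis lpD(2) a)
    show "(\<lambda>x. m x a) ` L = L" using lpD(2)[OF _ a] lpD(6)[OF a] unfolding image_def by blast
  qed
  thus ?thesis unfolding carr Bij_def rtrans_def
    by (simp add: bij_betw_def inj_on_def)
qed

abbreviation "T \<equiv> env_T L m"
abbreviation "G \<equiv> env_G L m"
abbreviation "H \<equiv> env_H L m e"

lemma T_carr: "T \<subseteq> carrier GG" unfolding env_T_def using rt_carr by blast

lemma G_sub: "subgroup G GG"
  unfolding env_G_def GGdef[symmetric] using generate_is_subgroup T_carr by simp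

lemma T_G: "T \<subseteq> G" unfolding env_G_def GGdef[symmetric] using generate.incl[of _ T GG] by blast

lemma G_carr: "G \<subseteq> carrier GG" using G_sub subgroup.subset by blast

lemma one_T: "\<one> \<in> T"
proof -
  have "\<one> = rtrans L m e"
    by (rule fun_eq) (simp_all add: rt_carr lpD(1,4) one_eval rt_eval)
  thus ?thesis using lpD(1) by (auto simp: env_T_def)
qed

lemma T_e: "u \<in> L \<Longrightarrow> rtrans L m u \<in> T" by (simp add: env_T_def)

lemma T_unique: assumes "t \<in> T" "t' \<in> T" "u \<in> L" "t u = t' u" shows "t = t'"
proof -
  obtain a where a: "a \<in> L" "t = rtrans L m a" using assms(1) unfolding env_T_def by blast
  obtain b where b: "b \<in> L" "t' = rtrans L m b" using assms(2) unfolding env_T_def by blast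
  have "m u a = m u b" using assms(4) unfolding a(2) b(2) rt_eval[OF assms(3)] .
  moreover have "\<exists>!x. x \<in> L \<and> m u x = m u a" using lpD(5)[OF assms(3) lpD(2)[OF assms(3) a(1)]] .
  ultimately have "a = b" using a(1) b(1) by auto
  thus ?thesis using a b by simp
qed

lemma T_exists: "u \<in> L \<Longrightarrow> v \<in> L \<Longrightarrow> \<exists>t\<in>T. t u = v"
proof -
  assume uv: "u \<in> L" "v \<in> L"
  from lpD(5)[OF uv] obtain a where "a \<in> L" "m u a = v" by auto
  thus ?thesis using rt_eval[OF \<open>u \<in> L\<close>] T_e by blast
qed


lemma conjT: "g \<in> G \<Longrightarrow> t \<in> T \<Longrightarrow> inv g \<otimes> t \<otimes> g \<in> T"
proof -
  have "\<forall>g\<in>env_G L m. \<forall>t\<in>env_T L m. inv\<^bsub>RBijGroup L\<^esub> g \<otimes>\<^bsub>RBijGroup L\<^esub> t \<otimes>\<^bsub>RBijGroup L\<^esub> g \<in> env_T L m"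
    using rcc unfolding rcc_loop_def by (rule conjunct2[OF conjunct2])
  thus "g \<in> G \<Longrightarrow> t \<in> T \<Longrightarrow> inv g \<otimes> t \<otimes> g \<in> T" unfolding GGdef by blast
qed

lemma conjT2: "g \<in> G \<Longrightarrow> t \<in> T \<Longrightarrow> g \<otimes> t \<otimes> inv g \<in> T"
  using conjT[of "inv g" t] G_sub by (simp add: subgroup.m_inv_closed subgroup.mem_carrier)

lemma H_alt: "H = {g\<in>G. g e = e}" by (simp add: env_H_def)

lemma canc1: "x \<in> carrier GG \<Longrightarrow> y \<in> carrier GG \<Longrightarrow> inv x \<otimes> (x \<otimes> y) = y"
  by (simp add: m_assoc[symmetric])
lemma canc2: "x \<in> carrier GG \<Longrightarrow> y \<in> carrier GG \<Longrightarrow> x \<otimes> (inv x \<otimes> y) = y"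
  by (simp add: m_assoc[symmetric])

lemma H_sub: "subgroup H GG"
proof (rule subgroupI)
  show "H \<subseteq> carrier GG" using G_carr H_alt by auto
  have "\<one> \<in> H" using H_alt subgroup.one_closed[OF G_sub] one_eval lpD(1) by simp
  thus "H \<noteq> {}" by blast
  fix a b assume a: "a \<in> H" and b: "b \<in> H"
  have ac: "a \<in> carrier GG" and aG: "a \<in> G" and ae: "a e = e" using a H_alt G_carr by auto
  have "(inv a) e = e" using inv_eval1[OF ac lpD(1)] ae by simp
  thus "inv a \<in> H" using H_alt subgroup.m_inv_closed[OF G_sub aG] by simp
  have "(a \<otimes> b) e = e" using mult_eval[OF lpD(1)] ae b H_alt by simp
  thus "a \<otimes> b \<in> H" using H_alt subgroup.m_closed[OF G_sub aG] b by simp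
qed

lemma fin_sub: "S \<subseteq> carrier GG \<Longrightarrow> finite S" using fin_carr finite_subset by blast

lemma card_formula:
  assumes S: "subgroup S GG" and SG: "S \<subseteq> G" and rt: "\<And>x. x \<in> S \<Longrightarrow> rtrans L m (x e) \<in> S"
  shows "card S = card (T \<inter> S) * card {h\<in>S. h e = e}"
proof -
  have Sc: "S \<subseteq> carrier GG" using S subgroup.subset by blast
  let ?A = "{h\<in>S. h e = e} \<times> (T \<inter> S)"
  have "bij_betw (\<lambda>(h,t). h \<otimes> t) ?A S"
  proof (rule bij_betwI')
    fix a b assume a: "a \<in> ?A" and b: "b \<in> ?A"
    obtain h t where ht: "a = (h,t)" "h \<in> S" "h e = e" "t \<in> T" "t \<in> S" using a by auto
    obtain h' t' where ht': "b = (h',t')" "h' \<in> S" "h' e = e" "t' \<in> T" "t' \<in> S" using b by auto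
    show "((\<lambda>(h,t). h \<otimes> t) a = (\<lambda>(h,t). h \<otimes> t) b) = (a = b)"
    proof
      assume eq: "(\<lambda>(h,t). h \<otimes> t) a = (\<lambda>(h,t). h \<otimes> t) b"
      hence "(h \<otimes> t) e = (h' \<otimes> t') e" using ht ht' by simp
      hence "t e = t' e" using mult_eval[OF lpD(1)] ht ht' by simp
      hence tt: "t = t'" using T_unique ht ht' lpD(1) by blast
      hence "h \<otimes> t = h' \<otimes> t" using eq ht ht' by simp
      hence "h = h'" using ht ht' Sc r_cancel by blast
      thus "a = b" using tt ht ht' by simp
    qed simp
  next
    fix a assume "a \<in> ?A"
    thus "(\<lambda>(h,t). h \<otimes> t) a \<in> S" using subgroup.m_closed[OF S] by auto
  next
    fix x assume x: "x \<in> S"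
    have xc: "x \<in> carrier GG" using x Sc by blast
    have xe: "x e \<in> L" using into[OF xc lpD(1)] .
    define t where "t = rtrans L m (x e)"
    have tT: "t \<in> T" "t \<in> S" using T_e[OF xe] rt[OF x] t_def by auto
    have tc: "t \<in> carrier GG" using tT Sc by blast
    have te: "t e = x e" using rt_e[OF xe] t_def by simp
    define h where "h = x \<otimes> inv t"
    have hS: "h \<in> S" using h_def x tT subgroup.m_closed[OF S] subgroup.m_inv_closed[OF S] by blast
    have "h e = (inv t) (t e)" using h_def mult_eval[OF lpD(1)] te by simp
    hence he: "h e = e" using inv_eval1[OF tc lpD(1)] by simp
    have "x = h \<otimes> t" using h_def xc tc by (simp add: m_assoc)
    thus "\<exists>a\<in>?A. x = (\<lambda>(h,t). h \<otimes> t) a" using hS he tT by auto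
  qed
  hence "card S = card ?A" by (simp add: bij_betw_same_card)
  also have "\<dots> = card {h\<in>S. h e = e} * card (T \<inter> S)" by (simp add: card_cartesian_product)
  finally show ?thesis by simp
qed

end

locale envK = env +
  fixes K
  assumes K_sub: "subgroup K GG" and HK: "H \<subseteq> K" and KG: "K \<subseteq> G"
begin

abbreviation "T1 \<equiv> T \<inter> K"
abbreviation "K1 \<equiv> generate GG T1"
abbreviation "H1 \<equiv> H \<inter> K1"

lemma K_carr: "K \<subseteq> carrier GG" using K_sub subgroup.subset by blast

lemma T_in_K:
  assumes t: "t \<in> T" and g: "g \<in> K" and x: "x \<in> K" and eq: "t (g e) = x (g e)"
  shows "t \<in> K" "g \<otimes> t \<otimes> inv x \<otimes> inv g \<in> H"
proof -
  have gc: "g \<in> carrier GG" and xc: "x \<in> carrier GG" using g x K_carr by auto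
  have tc: "t \<in> carrier GG" using t T_carr by auto
  have ge: "g e \<in> L" using into[OF gc lpD(1)] .
  define hh where "hh = g \<otimes> t \<otimes> inv x \<otimes> inv g"
  have hG: "hh \<in> G" unfolding hh_def using g x t KG T_G G_sub
    by (meson subgroup.m_closed subgroup.m_inv_closed subsetD)
  have "hh e = (inv g) ((inv x) (t (g e)))" unfolding hh_def using lpD(1) by (simp add: mult_eval)
  also have "\<dots> = e" using eq inv_eval1[OF xc ge] inv_eval1[OF gc lpD(1)] by simp
  finally have "hh \<in> H" using hG H_alt by simp
  thus "g \<otimes> t \<otimes> inv x \<otimes> inv g \<in> H" using hh_def by simp
  have "t = inv g \<otimes> hh \<otimes> g \<otimes> x" unfolding hh_def using gc xc tc
    by (simp add: m_assoc canc1)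
  moreover have "hh \<in> K" using \<open>hh \<in> H\<close> HK by blast
  ultimately show "t \<in> K" using g x K_sub
    by (metis subgroup.m_closed subgroup.m_inv_closed)
qed

lemma rtK: "x \<in> K \<Longrightarrow> rtrans L m (x e) \<in> K"
proof -
  assume x: "x \<in> K"
  have xe: "x e \<in> L" using into[OF _ lpD(1)] x K_carr by blast
  show ?thesis
  proof (rule T_in_K(1)[of _ "\<one>" x])
    show "rtrans L m (x e) \<in> T" using T_e[OF xe] .
    show "\<one> \<in> K" using subgroup.one_closed[OF K_sub] .
    show "x \<in> K" using x .
    show "rtrans L m (x e) (\<one> e) = x (\<one> e)" using one_eval[OF lpD(1)] rt_e[OF xe] by simp
  qed
qed

lemma T1_carr: "T1 \<subseteq> carrier GG" using T_carr by blast
lemma T1_K1: "T1 \<subseteq> K1" using generate.incl[of _ T1 GG] by blast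
lemma K1_sub: "subgroup K1 GG" using generate_is_subgroup[OF T1_carr] .
lemma K1_K: "K1 \<subseteq> K" using generate_subgroup_incl[OF _ K_sub] by blast
lemma K1_G: "K1 \<subseteq> G" using K1_K KG by blast
lemma K1_carr: "K1 \<subseteq> carrier GG" using K1_K K_carr by blast
lemma TK1: "T \<inter> K1 = T1" using T1_K1 K1_K by blast
lemma HK_alt: "{h\<in>K. h e = e} = H" using HK KG H_alt by blast
lemma H1_alt: "{h\<in>K1. h e = e} = H1" using K1_G H_alt by blast

lemma card_K: "card K = card T1 * card H"
proof -
  have "card K = card (T \<inter> K) * card {h\<in>K. h e = e}"
    by (rule card_formula[OF K_sub KG]) (rule rtK)
  thus ?thesis using HK_alt by simp
qed

lemma card_K1: "card K1 = card T1 * card H1"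
proof -
  have "rtrans L m (x e) \<in> K1" if "x \<in> K1" for x
  proof -
    have "rtrans L m (x e) \<in> T1" using rtK[of x] that K1_K T_e[OF into[OF _ lpD(1)]] K1_carr by blast
    thus ?thesis using T1_K1 by blast
  qed
  hence "card K1 = card (T \<inter> K1) * card {h\<in>K1. h e = e}"
    by (rule card_formula[OF K1_sub K1_G])
  thus ?thesis using TK1 H1_alt by simp
qed


lemma conjK: "g \<in> K \<Longrightarrow> t \<in> T1 \<Longrightarrow> inv g \<otimes> t \<otimes> g \<in> T1"
  using conjT[of g t] KG K_sub T_G
  by (meson IntD1 IntD2 IntI subgroup.m_closed subgroup.m_inv_closed subsetD)

lemma conjK2: "g \<in> K \<Longrightarrow> t \<in> T1 \<Longrightarrow> g \<otimes> t \<otimes> inv g \<in> T1"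
  using conjK[of "inv g" t] K_sub K_carr by (simp add: subgroup.m_inv_closed subsetD)

lemma K1_norm: assumes x: "x \<in> K" and h: "h \<in> K1" shows "x \<otimes> h \<otimes> inv x \<in> K1"
  using h
proof (induction rule: generate.induct)
  case one
  thus ?case using x K_carr subgroup.one_closed[OF K1_sub] by (simp add: subsetD)
next
  case (incl h) thus ?case using conjK2[OF x] T1_K1 by blast
next
  case (inv h)
  have xc: "x \<in> carrier GG" and hc: "h \<in> carrier GG" using x K_carr inv T_carr by auto
  have "x \<otimes> h \<otimes> inv x \<in> K1" using conjK2[OF x inv] T1_K1 by blast
  hence "inv (x \<otimes> h \<otimes> inv x) \<in> K1" using subgroup.m_inv_closed[OF K1_sub] by blast
  moreover have "inv (x \<otimes> h \<otimes> inv x) = x \<otimes> inv h \<otimes> inv x"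
    using xc hc by (simp add: inv_mult_group m_assoc)
  ultimately show ?case by simp
next
  case (eng h1 h2)
  have xc: "x \<in> carrier GG" and hc: "h1 \<in> carrier GG" "h2 \<in> carrier GG"
    using x K_carr eng.hyps K1_carr by auto
  have "x \<otimes> (h1 \<otimes> h2) \<otimes> inv x = (x \<otimes> h1 \<otimes> inv x) \<otimes> (x \<otimes> h2 \<otimes> inv x)"
    using xc hc by (simp add: m_assoc canc1)
  thus ?case using eng.IH subgroup.m_closed[OF K1_sub] by simp
qed

lemma commute_gen: assumes c: "c \<in> carrier GG" and ct: "\<And>t. t \<in> T1 \<Longrightarrow> c \<otimes> t = t \<otimes> c"
  and g: "g \<in> K1" shows "c \<otimes> g = g \<otimes> c"
  using g
proof (induction rule: generate.induct)
  case one thus ?case using c by simp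
next
  case (incl h) thus ?case using ct by blast
next
  case (inv h)
  have hc: "h \<in> carrier GG" using inv T_carr by auto
  have "inv h \<otimes> (c \<otimes> h) \<otimes> inv h = inv h \<otimes> (h \<otimes> c) \<otimes> inv h" using ct[OF inv] by simp
  thus ?case using hc c by (simp add: m_assoc canc1)
next
  case (eng h1 h2)
  have hc: "h1 \<in> carrier GG" "h2 \<in> carrier GG" using eng.hyps K1_carr by auto
  have "c \<otimes> (h1 \<otimes> h2) = (c \<otimes> h1) \<otimes> h2" using hc c by (simp add: m_assoc)
  also have "\<dots> = h1 \<otimes> (c \<otimes> h2)" using eng.IH hc c by (simp add: m_assoc)
  also have "\<dots> = (h1 \<otimes> h2) \<otimes> c" using eng.IH hc c by (simp add: m_assoc)
  finally show ?case .
qed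

lemma K_prod: "K = H <#> K1"
proof
  show "H <#> K1 \<subseteq> K" unfolding set_mult_def using HK K1_K subgroup.m_closed[OF K_sub] by blast
  show "K \<subseteq> H <#> K1"
  proof
    fix x assume x: "x \<in> K"
    have xc: "x \<in> carrier GG" using x K_carr by blast
    have xe: "x e \<in> L" using into[OF xc lpD(1)] .
    define t where "t = rtrans L m (x e)"
    have tT: "t \<in> T1" using rtK[OF x] T_e[OF xe] t_def by simp
    have tc: "t \<in> carrier GG" using tT T_carr by blast
    have te: "t e = x e" using rt_e[OF xe] t_def by simp
    define h where "h = x \<otimes> inv t"
    have "h \<in> G" using h_def x tT KG T_G G_sub
      by (meson IntD1 subgroup.m_closed subgroup.m_inv_closed subsetD)
    moreover have "h e = (inv t) (t e)" using h_def mult_eval[OF lpD(1)] te by simp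
    ultimately have hH: "h \<in> H" using inv_eval1[OF tc lpD(1)] H_alt by simp
    have "x = h \<otimes> t" using h_def xc tc by (simp add: m_assoc)
    thus "x \<in> H <#> K1" unfolding set_mult_def using hH tT T1_K1 by blast
  qed
qed

lemma folder_mem:
  assumes g: "g \<in> K1" and x: "x \<in> K1" and t: "t \<in> T1"
  shows "t \<in> ((inv g <# H1) #> g) #> x \<longleftrightarrow> t (g e) = x (g e)"
proof -
  have gc: "g \<in> carrier GG" and xc: "x \<in> carrier GG" and tc: "t \<in> carrier GG"
    using g x t K1_carr T_carr by auto
  have ge: "g e \<in> L" using into[OF gc lpD(1)] .
  have mem: "t \<in> ((inv g <# H1) #> g) #> x \<longleftrightarrow> (\<exists>h\<in>H1. t = inv g \<otimes> h \<otimes> g \<otimes> x)"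
    unfolding r_coset_def l_coset_def by blast
  show ?thesis
  proof
    assume "t \<in> ((inv g <# H1) #> g) #> x"
    then obtain h where h: "h \<in> H1" "t = inv g \<otimes> h \<otimes> g \<otimes> x" using mem by blast
    have he: "h e = e" using h(1) H_alt by auto
    show "t (g e) = x (g e)" using h(2) ge he inv_eval1[OF gc lpD(1)] by (simp add: mult_eval)
  next
    assume eq: "t (g e) = x (g e)"
    define hh where "hh = g \<otimes> t \<otimes> inv x \<otimes> inv g"
    have "hh \<in> H" using T_in_K(2)[of t g x] t g x K1_K eq hh_def by blast
    moreover have "hh \<in> K1" using hh_def g x t T1_K1 K1_sub
      by (meson subgroup.m_closed subgroup.m_inv_closed subsetD)
    moreover have "t = inv g \<otimes> hh \<otimes> g \<otimes> x" unfolding hh_def using gc xc tc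
      by (simp add: m_assoc canc1)
    ultimately show "t \<in> ((inv g <# H1) #> g) #> x" using mem by blast
  qed
qed

lemma folder_ex1:
  assumes g: "g \<in> K1" and x: "x \<in> K1"
  shows "\<exists>!t. t \<in> T1 \<and> t \<in> ((inv g <# H1) #> g) #> x"
proof -
  have gc: "g \<in> carrier GG" and xc: "x \<in> carrier GG" using g x K1_carr by auto
  have ge: "g e \<in> L" using into[OF gc lpD(1)] .
  have xge: "x (g e) \<in> L" using into[OF xc ge] .
  obtain t where t: "t \<in> T" "t (g e) = x (g e)" using T_exists[OF ge xge] by blast
  have "t \<in> K" using T_in_K(1)[of t g x] t g x K1_K by blast
  hence tT1: "t \<in> T1" using t by blast
  show ?thesis
  proof (rule ex1I[of _ t])
    show "t \<in> T1 \<and> t \<in> ((inv g <# H1) #> g) #> x" using tT1 folder_mem[OF g x tT1] t(2) by simp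
    fix t' assume a: "t' \<in> T1 \<and> t' \<in> ((inv g <# H1) #> g) #> x"
    hence t1: "t' \<in> T1" by simp
    hence "t' (g e) = x (g e)" using folder_mem[OF g x t1] a by simp
    thus "t' = t" using T_unique[OF _ _ ge, of t' t] t t1 by simp
  qed
qed

lemma card_dvd: "subgroup A GG \<Longrightarrow> subgroup B GG \<Longrightarrow> A \<subseteq> B \<Longrightarrow> card A dvd card B"
proof -
  assume A: "subgroup A GG" and B: "subgroup B GG" and AB: "A \<subseteq> B"
  have "subgroup A (GG\<lparr>carrier := B\<rparr>)" using subgroup_incl[OF A B AB] .
  hence "card (rcosets\<^bsub>GG\<lparr>carrier := B\<rparr>\<^esub> A) * card A = order (GG\<lparr>carrier := B\<rparr>)"
    using group.lagrange[OF subgroup_imp_group[OF B]] by blast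
  hence "card B = card (rcosets\<^bsub>GG\<lparr>carrier := B\<rparr>\<^esub> A) * card A" unfolding order_def by simp
  thus ?thesis using dvd_triv_right by metis
qed

lemma H1_sub: "subgroup H1 GG" using subgroups_Inter_pair[OF H_sub K1_sub] .

end

locale envKp = envK +
  fixes p :: nat
  assumes pprime: "Factorial_Ring.prime p" and cardK: "card K = p * card H"
begin

lemma one_T1: "\<one> \<in> T1" using one_T subgroup.one_closed[OF K_sub] by blast

lemma cardH_pos: "card H > 0"
  using fin_sub[OF subgroup.subset[OF H_sub]] subgroup.one_closed[OF H_sub] card_gt_0_iff by blast

lemma cardH1_pos: "card H1 > 0"
  using fin_sub[OF subgroup.subset[OF H1_sub]] subgroup.one_closed[OF H1_sub] card_gt_0_iff by blast

lemma card_T1: "card T1 = p"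
  using card_K cardK cardH_pos by simp

lemma card_K1': "card K1 = p * card H1"
  using card_K1 card_T1 by simp

lemma finT1: "finite T1" using fin_sub T1_carr by blast

lemma prime_index:
  assumes M: "subgroup M GG" and HM: "H1 \<subseteq> M" and MK: "M \<subseteq> K1" and ne: "M \<noteq> H1"
  shows "M = K1"
proof -
  obtain d where d: "card M = card H1 * d" using card_dvd[OF H1_sub M HM] by (auto elim: dvdE)
  obtain d' where d': "card K1 = card M * d'" using card_dvd[OF M K1_sub MK] by (auto elim: dvdE)
  have "card H1 * p = card H1 * (d * d')" using d d' card_K1' by (metis mult.assoc mult.commute)
  hence "p = d * d'" using cardH1_pos by (metis mult_left_cancel not_gr0)
  hence "d = 1 \<or> d' = 1" using prime_product pprime by metis
  thus ?thesis
  proof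
    assume "d = 1"
    hence "H1 = M" using card_subset_eq[OF fin_sub[OF subgroup.subset[OF M]] HM] d by simp
    thus ?thesis using ne by simp
  next
    assume "d' = 1"
    thus ?thesis using card_subset_eq[OF fin_sub[OF K1_carr] MK] d' by simp
  qed
qed

lemma p_central:
  assumes P: "subgroup P GG" and PK: "P \<subseteq> K" and cP: "card P = p ^ a"
    and g: "g \<in> P" and t: "t \<in> T1"
  shows "g \<otimes> t = t \<otimes> g"
proof -
  define \<phi> where "\<phi> = (\<lambda>g. \<lambda>t\<in>T1. g \<otimes> t \<otimes> inv g)"
  have Pc: "P \<subseteq> carrier GG" using P subgroup.subset by blast
  have conjc: "\<And>g t. g \<in> P \<Longrightarrow> t \<in> T1 \<Longrightarrow> g \<otimes> t \<otimes> inv g \<in> T1"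
    using conjK2 PK by blast
  have bk1: "\<And>g t. g \<in> P \<Longrightarrow> t \<in> T1 \<Longrightarrow> inv g \<otimes> (g \<otimes> t \<otimes> inv g) \<otimes> inv (inv g) = t"
    using Pc T1_carr by (simp add: m_assoc canc1 subsetD)
  have bk2: "\<And>g t. g \<in> P \<Longrightarrow> t \<in> T1 \<Longrightarrow> g \<otimes> (inv g \<otimes> t \<otimes> inv (inv g)) \<otimes> inv g = t"
    using Pc T1_carr by (simp add: m_assoc canc2 subsetD)
  have Bij: "\<phi> g \<in> Bij T1" if g: "g \<in> P" for g
  proof -
    have ig: "inv g \<in> P" using subgroup.m_inv_closed[OF P g] .
    have "bij_betw (\<phi> g) T1 T1"
    proof (rule bij_betw_byWitness[where f'="\<phi> (inv g)"])
      show "\<forall>a\<in>T1. \<phi> (inv g) (\<phi> g a) = a" using bk1[OF g] conjc[OF g] \<phi>_def by simp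
      show "\<forall>a\<in>T1. \<phi> g (\<phi> (inv g) a) = a" using bk2[OF g] conjc[OF ig] \<phi>_def by simp
      show "\<phi> g ` T1 \<subseteq> T1" using conjc[OF g] \<phi>_def by auto
      show "\<phi> (inv g) ` T1 \<subseteq> T1" using conjc[OF ig] \<phi>_def by auto
    qed
    thus ?thesis unfolding Bij_def \<phi>_def by simp
  qed
  have hom: "\<phi> (g \<otimes> h) = compose T1 (\<phi> g) (\<phi> h)" if g: "g \<in> P" and h: "h \<in> P" for g h
  proof
    fix t
    show "\<phi> (g \<otimes> h) t = compose T1 (\<phi> g) (\<phi> h) t"
    proof (cases "t \<in> T1")
      case True
      have "g \<otimes> (h \<otimes> t \<otimes> inv h) \<otimes> inv g = g \<otimes> h \<otimes> t \<otimes> inv (g \<otimes> h)"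
        using g h True Pc T1_carr by (simp add: m_assoc inv_mult_group subsetD)
      thus ?thesis using True conjc[OF h True] by (simp add: \<phi>_def compose_def)
    next
      case False
      have "\<phi> (g \<otimes> h) t = undefined" using False by (auto simp: \<phi>_def)
      moreover have "compose T1 (\<phi> g) (\<phi> h) t = undefined" using False by (auto simp: compose_def)
      ultimately show ?thesis by simp
    qed
  qed
  have grpP: "group (GG\<lparr>carrier := P\<rparr>)" using subgroup_imp_group[OF P] .
  have act: "group_action (GG\<lparr>carrier := P\<rparr>) T1 \<phi>"
    unfolding group_action_def group_hom_def group_hom_axioms_def
  proof (intro conjI)
    show "group (GG\<lparr>carrier := P\<rparr>)" using grpP .
    show "group (BijGroup T1)" using group_BijGroup .
    show "\<phi> \<in> hom (GG\<lparr>carrier := P\<rparr>) (BijGroup T1)"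
      unfolding hom_def using Bij hom subgroup.m_closed[OF P] by (auto simp: BijGroup_def)
  qed
  have "card (orbit (GG\<lparr>carrier := P\<rparr>) \<phi> t) * card (stabilizer (GG\<lparr>carrier := P\<rparr>) \<phi> t) = p ^ a"
    using group_action.orbit_stabilizer_theorem[OF act t] cP by (simp add: order_def)
  hence "card (orbit (GG\<lparr>carrier := P\<rparr>) \<phi> t) dvd p ^ a"
    using dvd_triv_left[of "card (orbit (GG\<lparr>carrier := P\<rparr>) \<phi> t)"] by metis
  then obtain j where "normalize (card (orbit (GG\<lparr>carrier := P\<rparr>) \<phi> t)) = p ^ j"
    using divides_primepow[OF pprime] by blast
  hence j: "card (orbit (GG\<lparr>carrier := P\<rparr>) \<phi> t) = p ^ j" by simp
  have orb: "orbit (GG\<lparr>carrier := P\<rparr>) \<phi> t = {\<phi> g t | g. g \<in> P}" by (simp add: orbit_def)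
  show ?thesis
  proof (cases "t = \<one>")
    case True thus ?thesis using g Pc by (simp add: subsetD)
  next
    case False
    have tc: "t \<in> carrier GG" using t T1_carr by blast
    have sub: "orbit (GG\<lparr>carrier := P\<rparr>) \<phi> t \<subseteq> T1 - {\<one>}"
    proof
      fix y assume "y \<in> orbit (GG\<lparr>carrier := P\<rparr>) \<phi> t"
      then obtain h where h: "h \<in> P" "y = h \<otimes> t \<otimes> inv h" using orb \<phi>_def t by auto
      have hc: "h \<in> carrier GG" using h Pc by blast
      have "y \<noteq> \<one>"
      proof
        assume "y = \<one>"
        hence "inv h \<otimes> (h \<otimes> t \<otimes> inv h) \<otimes> h = inv h \<otimes> \<one> \<otimes> h" using h by simp
        hence "t = \<one>" using hc tc by (simp add: m_assoc canc1)
        thus False using False by simp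
      qed
      thus "y \<in> T1 - {\<one>}" using h conjc t by blast
    qed
    have "card (orbit (GG\<lparr>carrier := P\<rparr>) \<phi> t) \<le> card (T1 - {\<one>})"
      using card_mono[OF _ sub] finT1 by blast
    also have "\<dots> = p - 1" using card_T1 one_T1 finT1 by simp
    finally have "p ^ j < p" using j prime_gt_1_nat[OF pprime] by simp
    have "j = 0"
    proof (rule ccontr)
      assume "j \<noteq> 0"
      hence "p ^ 1 \<le> p ^ j" using prime_gt_1_nat[OF pprime] by (intro power_increasing) auto
      thus False using \<open>p ^ j < p\<close> by simp
    qed
    hence c1: "card (orbit (GG\<lparr>carrier := P\<rparr>) \<phi> t) = 1" using j by simp
    have "\<phi> \<one> t \<in> orbit (GG\<lparr>carrier := P\<rparr>) \<phi> t" "\<phi> g t \<in> orbit (GG\<lparr>carrier := P\<rparr>) \<phi> t"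
      using orb g subgroup.one_closed[OF P] by auto
    moreover obtain z where "orbit (GG\<lparr>carrier := P\<rparr>) \<phi> t = {z}" using c1 card_1_singletonE by blast
    ultimately have "\<phi> g t = \<phi> \<one> t" by simp
    hence "g \<otimes> t \<otimes> inv g = t" using \<phi>_def t tc by simp
    hence "g \<otimes> t \<otimes> inv g \<otimes> g = t \<otimes> g" by simp
    thus ?thesis using g Pc tc by (simp add: m_assoc subsetD)
  qed
qed


lemma conj_inj: "a \<in> carrier GG \<Longrightarrow> h \<in> carrier GG \<Longrightarrow> h' \<in> carrier GG \<Longrightarrow>
   inv a \<otimes> h \<otimes> a = inv a \<otimes> h' \<otimes> a \<Longrightarrow> h = h'"
proof -
  assume c: "a \<in> carrier GG" "h \<in> carrier GG" "h' \<in> carrier GG" and eq: "inv a \<otimes> h \<otimes> a = inv a \<otimes> h' \<otimes> a"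
  have "a \<otimes> (inv a \<otimes> h \<otimes> a) \<otimes> inv a = a \<otimes> (inv a \<otimes> h' \<otimes> a) \<otimes> inv a" using eq by simp
  thus ?thesis using c by (simp add: m_assoc canc2)
qed

lemma exists_x: "\<exists>x\<in>K1. x \<notin> H1 \<and> (\<forall>t\<in>T1. x \<otimes> t = t \<otimes> x)"
proof -
  define a where "a = multiplicity p (card K1)"
  obtain mm where mm: "card K1 = p ^ a * mm" using multiplicity_dvd[of p "card K1"] a_def by (auto elim: dvdE)
  have ord: "order (GG\<lparr>carrier := K1\<rparr>) = p ^ a * mm" using mm by (simp add: order_def)
  have fin: "finite (carrier (GG\<lparr>carrier := K1\<rparr>))" using fin_sub[OF K1_carr] by simp
  obtain P where P: "subgroup P (GG\<lparr>carrier := K1\<rparr>)" "card P = p ^ a"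
    using sylow_thm[OF pprime subgroup_imp_group[OF K1_sub] ord fin] by blast
  have Psub: "subgroup P GG" using incl_subgroup[OF K1_sub P(1)] .
  have PK1: "P \<subseteq> K1" using subgroup.subset[OF P(1)] by simp
  have "\<not> P \<subseteq> H1"
  proof
    assume "P \<subseteq> H1"
    hence "p ^ a dvd card H1" using card_dvd[OF Psub H1_sub] P(2) by simp
    hence "p * p ^ a dvd p * card H1" by (rule mult_dvd_mono[OF dvd_refl])
    hence dv: "p ^ Suc a dvd card K1" using card_K1' by simp
    have nz: "card K1 \<noteq> 0" using card_K1' cardH1_pos prime_gt_1_nat[OF pprime] by simp
    have nu: "\<not> is_unit p" using pprime not_prime_unit by blast
    have "Suc a \<le> multiplicity p (card K1)"
      using power_dvd_iff_le_multiplicity[of "card K1" p "Suc a"] nz nu dv by simp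
    thus False using a_def by simp
  qed
  then obtain x where x: "x \<in> P" "x \<notin> H1" by blast
  have "\<forall>t\<in>T1. x \<otimes> t = t \<otimes> x" using p_central[OF Psub _ P(2) x(1)] PK1 K1_K by blast
  thus ?thesis using x PK1 by blast
qed

lemma K1_comm_T1: "g \<in> K1 \<Longrightarrow> t \<in> T1 \<Longrightarrow> g \<otimes> t = t \<otimes> g"
proof -
  obtain x where x: "x \<in> K1" "x \<notin> H1" "\<forall>t\<in>T1. x \<otimes> t = t \<otimes> x" using exists_x by blast
  have xc: "x \<in> carrier GG" using x K1_carr by blast
  have xcen: "x \<otimes> y = y \<otimes> x" if "y \<in> K1" for y using commute_gen[OF xc _ that] x(3) by blast
  have H1c: "H1 \<subseteq> carrier GG" using H1_sub subgroup.subset by blast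
  have H1K1: "H1 \<subseteq> K1" by blast
  define N where "N = {g\<in>K1. \<forall>h\<in>H1. inv g \<otimes> h \<otimes> g \<in> H1}"
  have Nsub: "subgroup N GG"
  proof (rule subgroupI)
    show "N \<subseteq> carrier GG" using N_def K1_carr by blast
    have "\<one> \<in> N" using N_def subgroup.one_closed[OF K1_sub] H1c by (auto simp: subsetD)
    thus "N \<noteq> {}" by blast
  next
    fix a assume a: "a \<in> N"
    have aK: "a \<in> K1" and ac: "a \<in> carrier GG" using a N_def K1_carr by auto
    have aN: "\<And>h. h \<in> H1 \<Longrightarrow> inv a \<otimes> h \<otimes> a \<in> H1" using a N_def by blast
    define f where "f = (\<lambda>h. inv a \<otimes> h \<otimes> a)"
    have "inj_on f H1" unfolding f_def inj_on_def using conj_inj[OF ac] H1c by blast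
    moreover have "f ` H1 \<subseteq> H1" using aN f_def by auto
    ultimately have fH: "f ` H1 = H1"
      using card_subset_eq[OF fin_sub[OF H1c]] card_image by metis
    have "a \<otimes> h \<otimes> inv a \<in> H1" if h: "h \<in> H1" for h
    proof -
      obtain h' where h': "h' \<in> H1" "h = f h'" using h fH by (metis imageE)
      have "a \<otimes> h \<otimes> inv a = h'" using h' ac H1c f_def by (simp add: m_assoc canc2 subsetD)
      thus ?thesis using h' by simp
    qed
    thus "inv a \<in> N" using N_def aK subgroup.m_inv_closed[OF K1_sub] ac by simp
  next
    fix a b assume a: "a \<in> N" and b: "b \<in> N"
    have ac: "a \<in> carrier GG" and bc: "b \<in> carrier GG" using a b N_def K1_carr by auto
    have "inv (a \<otimes> b) \<otimes> h \<otimes> (a \<otimes> b) \<in> H1" if h: "h \<in> H1" for h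
    proof -
      have "inv a \<otimes> h \<otimes> a \<in> H1" using a h N_def by blast
      hence "inv b \<otimes> (inv a \<otimes> h \<otimes> a) \<otimes> b \<in> H1" using b N_def by blast
      moreover have "inv (a \<otimes> b) \<otimes> h \<otimes> (a \<otimes> b) = inv b \<otimes> (inv a \<otimes> h \<otimes> a) \<otimes> b"
        using ac bc h H1c by (simp add: m_assoc inv_mult_group subsetD)
      ultimately show ?thesis by simp
    qed
    thus "a \<otimes> b \<in> N" using a b N_def subgroup.m_closed[OF K1_sub] by blast
  qed
  have "N = K1"
  proof (rule prime_index[OF Nsub])
    have "inv g \<otimes> h \<otimes> g \<in> H1" if "g \<in> H1" "h \<in> H1" for g h
      using that subgroup.m_closed[OF H1_sub] subgroup.m_inv_closed[OF H1_sub] by presburger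
    thus "H1 \<subseteq> N" unfolding N_def using H1K1 by blast
    show "N \<subseteq> K1" using N_def by blast
    have "inv x \<otimes> h \<otimes> x = h" if hh: "h \<in> H1" for h
    proof -
      have hc: "h \<in> carrier GG" using hh H1c by blast
      have "inv x \<otimes> h \<otimes> x = inv x \<otimes> (h \<otimes> x)" using hc xc by (simp add: m_assoc)
      also have "\<dots> = inv x \<otimes> (x \<otimes> h)" using xcen[of h] hh by simp
      also have "\<dots> = h" using hc xc by (simp add: canc1)
      finally show ?thesis .
    qed
    hence "x \<in> N" using N_def x(1) by simp
    thus "N \<noteq> H1" using x(2) by blast
  qed
  hence norm: "\<And>g h. g \<in> K1 \<Longrightarrow> h \<in> H1 \<Longrightarrow> inv g \<otimes> h \<otimes> g \<in> H1" using N_def by blast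
  define C where "C = {g\<in>K1. \<forall>t\<in>T1. g \<otimes> t = t \<otimes> g}"
  have Csub: "subgroup C GG"
  proof (rule subgroupI)
    show "C \<subseteq> carrier GG" using C_def K1_carr by blast
    have "\<one> \<in> C" using C_def subgroup.one_closed[OF K1_sub] T1_carr by (auto simp: subsetD)
    thus "C \<noteq> {}" by blast
  next
    fix a assume a: "a \<in> C"
    have ac: "a \<in> carrier GG" using a C_def K1_carr by auto
    have "inv a \<otimes> t = t \<otimes> inv a" if t: "t \<in> T1" for t
    proof -
      have tc: "t \<in> carrier GG" using t T1_carr by blast
      have "a \<otimes> t = t \<otimes> a" using a t C_def by blast
      hence "inv a \<otimes> (a \<otimes> t) \<otimes> inv a = inv a \<otimes> (t \<otimes> a) \<otimes> inv a" by simp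
      thus ?thesis using ac tc by (simp add: m_assoc canc1)
    qed
    thus "inv a \<in> C" using C_def a subgroup.m_inv_closed[OF K1_sub] by simp
  next
    fix a b assume a: "a \<in> C" and b: "b \<in> C"
    have ac: "a \<in> carrier GG" and bc: "b \<in> carrier GG" using a b C_def K1_carr by auto
    have "a \<otimes> b \<otimes> t = t \<otimes> (a \<otimes> b)" if t: "t \<in> T1" for t
    proof -
      have tc: "t \<in> carrier GG" using t T1_carr by blast
      have "a \<otimes> b \<otimes> t = a \<otimes> (t \<otimes> b)" using b t C_def ac bc tc by (simp add: m_assoc)
      also have "\<dots> = t \<otimes> (a \<otimes> b)" using a t C_def ac bc tc by (simp add: m_assoc[symmetric])
      finally show ?thesis .
    qed
    thus "a \<otimes> b \<in> C" using a b C_def subgroup.m_closed[OF K1_sub] by blast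
  qed
  have "C = K1"
  proof (rule prime_index[OF Csub])
    show "H1 \<subseteq> C"
    proof
      fix h assume h: "h \<in> H1"
      have hK1: "h \<in> K1" and hc: "h \<in> carrier GG" and he: "h e = e" and hK: "h \<in> K"
        using h H1c H_alt K1_K by auto
      have "h \<otimes> t = t \<otimes> h" if t: "t \<in> T1" for t
      proof -
        have tc: "t \<in> carrier GG" using t T1_carr by blast
        have tK1: "t \<in> K1" using t T1_K1 by blast
        have te: "t e \<in> L" using into[OF tc lpD(1)] .
        define s where "s = inv h \<otimes> t \<otimes> h"
        have sT: "s \<in> T1" using conjK[OF hK t] s_def by simp
        have w: "t \<otimes> h \<otimes> inv t \<in> H1"
          using norm[of "inv t" h] h subgroup.m_inv_closed[OF K1_sub tK1] tc by simp
        hence "(t \<otimes> h \<otimes> inv t) e = e" using H_alt by auto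
        hence "(inv t) (h (t e)) = e" by (simp add: mult_eval lpD(1))
        hence "t ((inv t) (h (t e))) = t e" by simp
        hence hte: "h (t e) = t e" using inv_eval2[OF tc into[OF hc te]] by simp
        have ihe: "(inv h) e = e" using inv_eval1[OF hc lpD(1)] he by simp
        have "s e = h (t ((inv h) e))" using s_def by (simp add: mult_eval lpD(1))
        hence "s e = t e" using ihe hte by simp
        hence "s = t" using T_unique[of s t e] sT t lpD(1) by blast
        hence "h \<otimes> (inv h \<otimes> t \<otimes> h) = h \<otimes> t" using s_def by simp
        thus ?thesis using hc tc by (simp add: m_assoc canc2)
      qed
      thus "h \<in> C" using C_def hK1 by blast
    qed
    show "C \<subseteq> K1" using C_def by blast
    have "x \<in> C" using C_def x by blast
    thus "C \<noteq> H1" using x(2) by blast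
  qed
  thus "g \<in> K1 \<Longrightarrow> t \<in> T1 \<Longrightarrow> g \<otimes> t = t \<otimes> g" using C_def by blast
qed

lemma K1_comm: "g \<in> K1 \<Longrightarrow> y \<in> K1 \<Longrightarrow> g \<otimes> y = y \<otimes> g"
  using commute_gen[of g y] K1_comm_T1 K1_carr by blast

lemma H1_norm: assumes x: "x \<in> K" and h: "h \<in> H1" shows "x \<otimes> h \<otimes> inv x \<in> H1"
proof -
  obtain h0 y where hy: "h0 \<in> H" "y \<in> K1" "x = h0 \<otimes> y"
    using x K_prod unfolding set_mult_def by blast
  have c: "h0 \<in> carrier GG" "y \<in> carrier GG" "h \<in> carrier GG"
    using hy h K1_carr subgroup.subset[OF H_sub] by auto
  have yh: "y \<otimes> h = h \<otimes> y" using K1_comm hy(2) h by blast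
  have "x \<otimes> h \<otimes> inv x = h0 \<otimes> (y \<otimes> h) \<otimes> inv y \<otimes> inv h0"
    using hy(3) c by (simp add: m_assoc inv_mult_group)
  also have "\<dots> = h0 \<otimes> h \<otimes> inv h0" using yh c by (simp add: m_assoc)
  finally have eq: "x \<otimes> h \<otimes> inv x = h0 \<otimes> h \<otimes> inv h0" .
  have "h0 \<otimes> h \<otimes> inv h0 \<in> H" using hy(1) h H_sub
    by (meson IntD1 subgroup.m_closed subgroup.m_inv_closed)
  moreover have "x \<otimes> h \<otimes> inv x \<in> K1" using K1_norm[OF x] h by blast
  ultimately show ?thesis using eq by simp
qed

end

lemma envKpI:
  assumes "group GG" "GG = RBijGroup L" "rcc_loop L m e" "subgroup K GG"
    "env_H L m e \<subseteq> K" "K \<subseteq> env_G L m" "Factorial_Ring.prime p" "card K = p * card (env_H L m e)"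
  shows "envKp GG L m e K p"
  using assms by (simp add: envKp_def envKp_axioms_def envK_def envK_axioms_def env_def env_axioms_def)

theorem lemma5p1:
  fixes L :: "'a set" and m :: "'a \<Rightarrow> 'a \<Rightarrow> 'a" and e :: 'a
    and p q :: nat and K :: "('a \<Rightarrow> 'a) set"
  defines "\<G> \<equiv> RBijGroup L"
  defines "G \<equiv> env_G L m" and "H \<equiv> env_H L m e" and "T \<equiv> env_T L m"
  defines "T1 \<equiv> T \<inter> K"
  defines "K1 \<equiv> generate \<G> T1"
  defines "H1 \<equiv> H \<inter> K1"
  assumes "Factorial_Ring.prime p" and "Factorial_Ring.prime q" and "p \<noteq> q"
    and "rcc_loop L m e" and "card L = p * q"
    and "subgroup K \<G>" and "H \<subset> K" and "K \<subset> G"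
    and "card G = q * card K" and "card K = p * card H"
  shows "rcc_loop_folder (\<G>\<lparr>carrier := K1\<rparr>) H1 T1 \<and> card T1 = p
    \<and> comm_group (\<G>\<lparr>carrier := K1\<rparr>)
    \<and> K1 \<lhd> \<G>\<lparr>carrier := K\<rparr>
    \<and> K = H <#>\<^bsub>\<G>\<^esub> K1
    \<and> H1 \<lhd> \<G>\<lparr>carrier := K\<rparr>"
proof -
  have grp: "group \<G>" unfolding \<G>_def by (rule group_RBij)
  have HK: "H \<subseteq> K" and KG: "K \<subseteq> G" using \<open>H \<subset> K\<close> \<open>K \<subset> G\<close> by auto
  interpret E: envKp \<G> L m e K p
    by (rule envKpI) (use grp assms HK KG in \<open>simp_all add: G_def H_def\<close>)
  have T1e: "T1 = env_T L m \<inter> K" using T1_def T_def by simp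
  have K1e: "K1 = generate \<G> (env_T L m \<inter> K)" using K1_def T1e by simp
  have H1e: "H1 = env_H L m e \<inter> generate \<G> (env_T L m \<inter> K)" using H1_def H_def K1e by simp
  have grpK1: "group (\<G>\<lparr>carrier := K1\<rparr>)" using E.subgroup_imp_group[OF E.K1_sub] K1e by simp
  have grpK: "group (\<G>\<lparr>carrier := K\<rparr>)" using E.subgroup_imp_group[OF E.K_sub] .
  have invK1: "\<And>g. g \<in> K1 \<Longrightarrow> inv\<^bsub>\<G>\<lparr>carrier := K1\<rparr>\<^esub> g = inv\<^bsub>\<G>\<^esub> g"
    using E.m_inv_consistent[OF E.K1_sub] K1e by simp
  have invK: "\<And>g. g \<in> K \<Longrightarrow> inv\<^bsub>\<G>\<lparr>carrier := K\<rparr>\<^esub> g = inv\<^bsub>\<G>\<^esub> g"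
    using E.m_inv_consistent[OF E.K_sub] by simp
  have folder: "loop_folder (\<G>\<lparr>carrier := K1\<rparr>) H1 T1"
    unfolding loop_folder_def
  proof (intro conjI ballI)
    show "group (\<G>\<lparr>carrier := K1\<rparr>)" using grpK1 .
    show "finite (carrier (\<G>\<lparr>carrier := K1\<rparr>))" using E.fin_sub[OF E.K1_carr] K1e by simp
    show "subgroup H1 (\<G>\<lparr>carrier := K1\<rparr>)"
      using E.subgroup_incl[OF E.H1_sub E.K1_sub] H1e K1e by blast
    show "\<one>\<^bsub>\<G>\<lparr>carrier := K1\<rparr>\<^esub> \<in> T1" using E.one_T1 T1e by simp
    show "T1 \<subseteq> carrier (\<G>\<lparr>carrier := K1\<rparr>)" using E.T1_K1 T1e K1e by simp
    fix g x assume g: "g \<in> carrier (\<G>\<lparr>carrier := K1\<rparr>)" and x: "x \<in> carrier (\<G>\<lparr>carrier := K1\<rparr>)"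
    have gK: "g \<in> K1" and xK: "x \<in> K1" using g x by auto
    have "(inv\<^bsub>\<G>\<lparr>carrier := K1\<rparr>\<^esub> g <#\<^bsub>\<G>\<lparr>carrier := K1\<rparr>\<^esub> H1 #>\<^bsub>\<G>\<lparr>carrier := K1\<rparr>\<^esub> g) #>\<^bsub>\<G>\<lparr>carrier := K1\<rparr>\<^esub> x
        = ((inv\<^bsub>\<G>\<^esub> g <#\<^bsub>\<G>\<^esub> H1) #>\<^bsub>\<G>\<^esub> g) #>\<^bsub>\<G>\<^esub> x"
      using invK1[OF gK] by (simp add: r_coset_def l_coset_def)
    thus "\<exists>!t. t \<in> T1 \<and> t \<in> (inv\<^bsub>\<G>\<lparr>carrier := K1\<rparr>\<^esub> g <#\<^bsub>\<G>\<lparr>carrier := K1\<rparr>\<^esub> H1 #>\<^bsub>\<G>\<lparr>carrier := K1\<rparr>\<^esub> g) #>\<^bsub>\<G>\<lparr>carrier := K1\<rparr>\<^esub> x"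
      using E.folder_ex1[of g x] gK xK T1e K1e H1e by simp
  qed
  have rcc: "rcc_loop_folder (\<G>\<lparr>carrier := K1\<rparr>) H1 T1"
    unfolding rcc_loop_folder_def
  proof (intro conjI ballI)
    show "loop_folder (\<G>\<lparr>carrier := K1\<rparr>) H1 T1" using folder .
    fix g t assume g: "g \<in> carrier (\<G>\<lparr>carrier := K1\<rparr>)" and t: "t \<in> T1"
    have gK: "g \<in> K1" using g by simp
    show "inv\<^bsub>\<G>\<lparr>carrier := K1\<rparr>\<^esub> g \<otimes>\<^bsub>\<G>\<lparr>carrier := K1\<rparr>\<^esub> t \<otimes>\<^bsub>\<G>\<lparr>carrier := K1\<rparr>\<^esub> g \<in> T1"
      using invK1[OF gK] E.conjK[of g t] gK t E.K1_K T1e K1e by auto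
  qed
  have comm: "comm_group (\<G>\<lparr>carrier := K1\<rparr>)"
    using group.group_comm_groupI[OF grpK1] E.K1_comm K1e by simp
  have nK1: "K1 \<lhd> \<G>\<lparr>carrier := K\<rparr>"
    unfolding group.normal_inv_iff[OF grpK]
  proof (intro conjI ballI)
    show "subgroup K1 (\<G>\<lparr>carrier := K\<rparr>)" using E.subgroup_incl[OF E.K1_sub E.K_sub E.K1_K] K1e by simp
    fix x h assume x: "x \<in> carrier (\<G>\<lparr>carrier := K\<rparr>)" and h: "h \<in> K1"
    show "x \<otimes>\<^bsub>\<G>\<lparr>carrier := K\<rparr>\<^esub> h \<otimes>\<^bsub>\<G>\<lparr>carrier := K\<rparr>\<^esub> inv\<^bsub>\<G>\<lparr>carrier := K\<rparr>\<^esub> x \<in> K1"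
      using invK[of x] E.K1_norm[of x h] x h K1e by simp
  qed
  have prod: "K = H <#>\<^bsub>\<G>\<^esub> K1" using E.K_prod H_def K1e by simp
  have nH1: "H1 \<lhd> \<G>\<lparr>carrier := K\<rparr>"
    unfolding group.normal_inv_iff[OF grpK]
  proof (intro conjI ballI)
    have "H1 \<subseteq> K" using H1e E.K1_K by blast
    thus "subgroup H1 (\<G>\<lparr>carrier := K\<rparr>)" using E.subgroup_incl[OF E.H1_sub E.K_sub] H1e by simp
    fix x h assume x: "x \<in> carrier (\<G>\<lparr>carrier := K\<rparr>)" and h: "h \<in> H1"
    show "x \<otimes>\<^bsub>\<G>\<lparr>carrier := K\<rparr>\<^esub> h \<otimes>\<^bsub>\<G>\<lparr>carrier := K\<rparr>\<^esub> inv\<^bsub>\<G>\<lparr>carrier := K\<rparr>\<^esub> x \<in> H1"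
      using invK[of x] E.H1_norm[of x h] x h H1e by simp
  qed
  have "card T1 = p" using E.card_T1 T1e by simp
  thus ?thesis using rcc comm nK1 prod nH1 by blast
qed

end
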